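(* For every $n\geq 1$, \[\deg(\mathrm{nib}:S_n\to S_n)=\frac{(n-1)(n-2)^2+n^2}{n!}+\sum_{k=1}^{n-2}\frac{k(k^3-k+1)}{(k+2)!}.\] Furthermore, \[\lim_{n\to\infty}\deg(\mathrm{nib}:S_n\to S_n)=4e-9.\]
   Context: For finite sets $X,Y$ and $f:X\to Y$, $\deg(f)=\frac{1}{|X|}\sum_{y\in Y}|f^{-1}(y)|^2$. $S_n$ is the set of permutations $\pi=\pi_1\cdots\pi_n$ of $\{1,\dots,n\}$. A descent of $\pi$ is an index $i\in\{1,\dots,n-1\}$ with $\pi_i>\pi_{i+1}$. The nibble sort map $\mathrm{nib}:S_n\to S_n$ fixes the identity $12\cdots n$, and for $\pi\neq 12\cdots n$ with smallest descent $i$, $\mathrm{nib}(\pi)$ is obtained from $\pi$ by swapping $\pi_i$ and $\pi_{i+1}$. *)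

theory Defs
  imports "HOL-Analysis.Analysis" "HOL-Combinatorics.Multiset_Permutations"
begin

definition map_deg :: "('a \<Rightarrow> 'b) \<Rightarrow> 'a set \<Rightarrow> 'b set \<Rightarrow> real" where
  "map_deg f X Y = (\<Sum>y\<in>Y. real (card {x\<in>X. f x = y}) ^ 2) / real (card X)"

definition Sym :: "nat \<Rightarrow> nat list set" where
  "Sym n = permutations_of_set {1..n}"

text \<open>Descent at (1-based) index i: 1 \<le> i \<le> n-1 and pi_i > pi_(i+1).
  With 0-based list indexing, pi_i = xs ! (i-1).\<close>
definition is_descent :: "nat list \<Rightarrow> nat \<Rightarrow> bool" where
  "is_descent xs i \<longleftrightarrow> 1 \<le> i \<and> i < length xs \<and> xs ! (i - 1) > xs ! i"

definition nib :: "nat list \<Rightarrow> nat list" where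
  "nib xs = (if \<exists>i. is_descent xs i then
     (let i = (LEAST i. is_descent xs i) in xs[i - 1 := xs ! i, i := xs ! (i - 1)])
   else xs)"

end

theory Submission imports Defs begin
fun nb :: "nat list \<Rightarrow> nat list" where
  "nb [] = []" | "nb [x] = [x]"
| "nb (x#y#t) = (if y < x then y#x#t else x # nb (y#t))"

lemma desc0[simp]: "\<not> is_descent xs 0" by (simp add: is_descent_def)
lemma desc1[simp]: "is_descent (x#y#t) (Suc 0) \<longleftrightarrow> y < x" by (simp add: is_descent_def)
lemma descSS[simp]: "is_descent (x#xs) (Suc (Suc j)) \<longleftrightarrow> is_descent xs (Suc j)"
  by (simp add: is_descent_def)
lemma desc_short: "length xs < 2 \<Longrightarrow> \<not> is_descent xs i" by (auto simp: is_descent_def)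

lemma nib_nb: "nib xs = nb xs"
proof (induction xs rule: nb.induct)
  case 1 then show ?case by (simp add: nib_def desc_short)
next
  case (2 x) then show ?case by (simp add: nib_def desc_short)
next
  case (3 x y t)
  show ?case
  proof (cases "y < x")
    case True
    have "(LEAST i. is_descent (x#y#t) i) = 1"
      by (rule Least_equality) (use True in \<open>auto simp: is_descent_def\<close>)
    moreover have "is_descent (x#y#t) (Suc 0)" using True by simp
    ultimately show ?thesis using True unfolding nib_def by (metis One_nat_def diff_Suc_1 list_update_code(2,3) nb.simps(3) nth_Cons_0 nth_Cons_Suc)
  next
    case False
    have eq: "is_descent (x#y#t) i \<longleftrightarrow> (\<exists>j. i = Suc j \<and> is_descent (y#t) j)" for i
      using False by (cases i; cases "i - 1"; auto)
    show ?thesis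
    proof (cases "\<exists>i. is_descent (y#t) i")
      case True
      then obtain i0 where "is_descent (y#t) i0" by blast
      have L: "(LEAST i. is_descent (x#y#t) i) = Suc (LEAST i. is_descent (y#t) i)"
        by (rule Least_Suc2[of _ "Suc i0" _ i0]) (use \<open>is_descent (y#t) i0\<close> eq in auto)
      define j where "j = (LEAST i. is_descent (y#t) i)"
      have "is_descent (y#t) j" unfolding j_def using True by (metis LeastI)
      then obtain j' where j': "j = Suc j'" by (cases j) auto
      have ex: "\<exists>i. is_descent (x#y#t) i" using True eq by blast
      have "nib (y#t) = (y#t)[j - 1 := (y#t) ! j, j := (y#t) ! (j - 1)]"
        using True unfolding nib_def j_def Let_def by (simp only: if_True)
      moreover have "nib (x#y#t) = (x#y#t)[Suc j - 1 := (x#y#t) ! Suc j, Suc j := (x#y#t) ! (Suc j - 1)]"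
        using ex L unfolding nib_def j_def Let_def by (simp only: if_True)
      ultimately have "nib (x#y#t) = x # nib (y#t)" using j' by simp
      then show ?thesis using 3 False by simp
    next
      case F2: False
      then show ?thesis using 3 False eq by (simp add: nib_def)
    qed
  qed
qed

lemma nb_length[simp]: "length (nb xs) = length xs"
  by (induction xs rule: nb.induct) auto
lemma nb_set[simp]: "set (nb xs) = set xs"
  by (induction xs rule: nb.induct) auto
lemma nb_distinct[simp]: "distinct (nb xs) = distinct xs"
  by (induction xs rule: nb.induct) auto

lemma nb_Cons: "nb (a#p) = (case p of [] \<Rightarrow> [a] | b#r \<Rightarrow> if b < a then b#a#r else a # nb (b#r))"
  by (cases p) auto

lemma nb_hd: "nb (b#r) = y#t \<Longrightarrow> y \<le> b"
  by (cases r) (auto split: if_splits)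

fun c :: "nat list \<Rightarrow> nat" where
  "c [] = 1" | "c [x] = 1"
| "c (x#y#t) = (if x < y then c (y#t) + 1 else (case t of [] \<Rightarrow> 0 | z#_ \<Rightarrow> if x < z then 1 else 0))"

lemma pre_finite: "finite {\<pi>. nb \<pi> = \<sigma>}"
proof (rule finite_subset)
  show "{\<pi>. nb \<pi> = \<sigma>} \<subseteq> {xs. set xs \<subseteq> set \<sigma> \<and> length xs = length \<sigma>}" by auto
  show "finite {xs. set xs \<subseteq> set \<sigma> \<and> length xs = length \<sigma>}"
    by (rule finite_lists_length_eq) simp
qed

lemma pre_Nil: "{\<pi>. nb \<pi> = []} = {[]}"
  by (auto dest: arg_cong[where f=length])

lemma pre_single: "{\<pi>. nb \<pi> = [x]} = {[x]}"
proof -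
  have "nb \<pi> = [x] \<Longrightarrow> \<pi> = [x]" for \<pi>
    by (cases \<pi> rule: nb.cases) (auto split: if_splits dest: arg_cong[where f=length])
  then show ?thesis by auto
qed

lemma pre_up: assumes "x < y"
  shows "{\<pi>. nb \<pi> = x#y#t} = (Cons x) ` {\<pi>. nb \<pi> = y#t} \<union> {y#x#t}"
proof (intro equalityI subsetI)
  fix \<pi> assume "\<pi> \<in> {\<pi>. nb \<pi> = x#y#t}"
  then have h: "nb \<pi> = x#y#t" by simp
  then obtain a p where \<pi>: "\<pi> = a#p" by (cases \<pi>) auto
  show "\<pi> \<in> (Cons x) ` {\<pi>. nb \<pi> = y#t} \<union> {y#x#t}"
  proof (cases p)
    case Nil then show ?thesis using h \<pi> by simp
  next
    case (Cons b r)
    then show ?thesis using h \<pi> by (auto split: if_splits)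
  qed
next
  fix \<pi> assume "\<pi> \<in> (Cons x) ` {\<pi>. nb \<pi> = y#t} \<union> {y#x#t}"
  then consider "\<pi> = y#x#t" | p where "\<pi> = x#p" "nb p = y#t" by auto
  then show "\<pi> \<in> {\<pi>. nb \<pi> = x#y#t}"
  proof cases
    case 1 then show ?thesis using assms by simp
  next
    case 2
    then obtain b r where p: "p = b#r" by (cases p) auto
    have "y \<le> b" using nb_hd 2 p by blast
    then show ?thesis using 2 p assms by simp
  qed
qed

lemma pre_down: assumes "y < x" "distinct (x#y#t)"
  shows "{\<pi>. nb \<pi> = x#y#t} = (case t of [] \<Rightarrow> {} | z#t' \<Rightarrow> if x < z then {x#z#y#t'} else {})"
proof (intro equalityI subsetI)
  fix \<pi> assume "\<pi> \<in> {\<pi>. nb \<pi> = x#y#t}"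
  then have h: "nb \<pi> = x#y#t" by simp
  then obtain a b r where \<pi>: "\<pi> = a#b#r"
  proof -
    have "length \<pi> = Suc (Suc (length t))" using h nb_length by (metis length_Cons)
    then show ?thesis using that by (auto simp: length_Suc_conv)
  qed
  have nb1: "\<not> b < a"
  proof
    assume "b < a"
    then have "b#a#r = x#y#t" using h \<pi> by simp
    then show False using \<open>b < a\<close> assms(1) by simp
  qed
  then have "a # nb (b#r) = x#y#t" using h \<pi> by simp
  then have a: "a = x" and nbr: "nb (b#r) = y#t" by simp_all
  obtain q r' where r: "r = q#r'" using nbr nb1 a assms(1) by (cases r) auto
  have qb: "q < b"
  proof (rule ccontr)
    assume "\<not> q < b"
    then have "nb (b#r) = b # nb (q#r')" using r by simp
    then have "y = b" using nbr by simp
    then show False using nb1 a assms(1) by simp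
  qed
  then have "q#b#r' = y#t" using nbr r by simp
  then have "y = q" "t = b#r'" by simp_all
  moreover have "x \<noteq> b" using assms(2) \<open>t = b#r'\<close> by auto
  ultimately have "x < b" using nb1 a by simp
  then show "\<pi> \<in> (case t of [] \<Rightarrow> {} | z#t' \<Rightarrow> if x < z then {x#z#y#t'} else {})"
    using \<pi> a r \<open>y = q\<close> \<open>t = b#r'\<close> by simp
next
  fix \<pi> assume "\<pi> \<in> (case t of [] \<Rightarrow> {} | z#t' \<Rightarrow> if x < z then {x#z#y#t'} else {})"
  then obtain z t' where "t = z#t'" "x < z" "\<pi> = x#z#y#t'" by (auto split: list.splits if_splits)
  then show "\<pi> \<in> {\<pi>. nb \<pi> = x#y#t}" using assms by auto
qed

lemma card_pre: "distinct \<sigma> \<Longrightarrow> card {\<pi>. nb \<pi> = \<sigma>} = c \<sigma>"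
proof (induction \<sigma> rule: c.induct)
  case 1 then show ?case by (simp add: pre_Nil)
next
  case (2 x) then show ?case by (simp add: pre_single)
next
  case (3 x y t)
  show ?case
  proof (cases "x < y")
    case True
    have "card {\<pi>. nb \<pi> = x#y#t} = card ((Cons x) ` {\<pi>. nb \<pi> = y#t}) + 1"
      unfolding pre_up[OF True] using True pre_finite by (subst card_Un_disjoint) auto
    also have "\<dots> = c (y#t) + 1" using 3 True by (simp add: card_image)
    finally show ?thesis using True by simp
  next
    case False
    then have "y < x" using 3(2) by (cases "x = y") auto
    then show ?thesis unfolding pre_down[OF \<open>y < x\<close> 3(2)] using False
      by (auto split: list.splits)
  qed
qed

lemma c_up: "xs \<noteq> [] \<Longrightarrow> x < hd xs \<Longrightarrow> c (x#xs) = c xs + 1"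
  by (cases xs) auto

lemma sorted_Cons2: "sorted_wrt (<) (p#q#t) \<longleftrightarrow> (p::nat) < q \<and> sorted_wrt (<) (q#t)"
  by (rule sorted_wrt2) (auto simp: transp_def)

lemma c_sorted: "sorted_wrt (<) \<tau> \<Longrightarrow> \<tau> \<noteq> [] \<Longrightarrow> c \<tau> = length \<tau>"
  by (induction \<tau> rule: c.induct) (auto simp: sorted_Cons2)

lemma c_sorted_snoc: "sorted_wrt (<) \<tau> \<Longrightarrow> \<tau> \<noteq> [] \<Longrightarrow> distinct (\<tau>@[x]) \<Longrightarrow>
   c (\<tau>@[x]) = (if last \<tau> < x then length \<tau> + 1 else length \<tau> - 1)"
proof (induction \<tau> rule: c.induct)
  case (2 p)
  then show ?case by auto
next
  case (3 p q t)
  then have "p < q" "sorted_wrt (<) (q#t)" by (simp_all add: sorted_Cons2)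
  then have "c ((p#q#t)@[x]) = c ((q#t)@[x]) + 1" by simp
  then show ?case using 3 \<open>p < q\<close> \<open>sorted_wrt (<) (q#t)\<close> by simp
qed simp

lemma c_type2: "sorted_wrt (<) (\<rho>@[a]) \<Longrightarrow> b < a \<Longrightarrow>
   c (\<rho>@[a,b]) = length \<rho> \<and> c (\<rho>@[a,b,x]) = length \<rho> + (if a < x then 1 else 0)"
proof (induction \<rho>)
  case Nil then show ?case by simp
next
  case (Cons p \<rho>)
  have s: "sorted_wrt (<) (\<rho>@[a])" using Cons.prems by simp
  have "p < hd (\<rho>@[a])" using Cons.prems by (cases \<rho>) auto
  then have "p < hd (\<rho>@[a,b])" "p < hd (\<rho>@[a,b,x])" by (cases \<rho>; simp)+
  then have "c (p#\<rho>@[a,b]) = c (\<rho>@[a,b]) + 1" "c (p#\<rho>@[a,b,x]) = c (\<rho>@[a,b,x]) + 1"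
    by (simp_all add: c_up)
  then show ?case using Cons.IH[OF s Cons.prems(2)] by simp
qed

lemma c_other: "\<not> sorted_wrt (<) \<tau> \<Longrightarrow> (\<forall>\<rho> a b. \<tau> = \<rho>@[a,b] \<longrightarrow> \<not> sorted_wrt (<) (\<rho>@[a]))
   \<Longrightarrow> c (\<tau>@[x]) = c \<tau>"
proof (induction \<tau> rule: c.induct)
  case (3 p q t)
  show ?case
  proof (cases "p < q")
    case True
    have ns: "\<not> sorted_wrt (<) (q#t)" using 3(2) True sorted_Cons2[of p q t] by blast
    have h2: "\<forall>\<rho> a b. q#t = \<rho>@[a,b] \<longrightarrow> \<not> sorted_wrt (<) (\<rho>@[a])"
    proof (intro allI impI notI)
      fix \<rho> a b assume e: "q#t = \<rho>@[a,b]" and so: "sorted_wrt (<) (\<rho>@[a])"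
      have "p < hd (\<rho>@[a])" using e True by (cases \<rho>) auto
      then have "sorted_wrt (<) ((p#\<rho>)@[a])" using so
        by (cases "\<rho>@[a]") (auto simp: sorted_Cons2)
      moreover have "p#q#t = (p#\<rho>)@[a,b]" using e by simp
      ultimately show False using 3(3) by blast
    qed
    have "c (p#q#t@[x]) = c (q#t@[x]) + 1" using True by simp
    then show ?thesis using 3(1)[OF True ns h2] True by simp
  next
    case False
    have "t \<noteq> []"
    proof
      assume "t = []"
      then have "p#q#t = []@[p,q]" by simp
      then show False using 3(3) by force
    qed
    then show ?thesis using False by (cases t) auto
  qed
qed auto

lemma sls_eq: "sorted_wrt (<) (\<tau>::nat list) \<Longrightarrow> sorted_list_of_set (set \<tau>) = \<tau>"
  by (metis sorted_distinct_set_unique strict_sorted_iff sorted_sorted_list_of_set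
      distinct_sorted_list_of_set set_sorted_list_of_set finite_set)

lemma sorted_le_last: "sorted_wrt (<) (xs::nat list) \<Longrightarrow> y \<in> set xs \<Longrightarrow> y \<le> last xs"
proof (induction xs rule: rev_induct)
  case (snoc l ys) then show ?case by (auto simp: sorted_wrt_append)
qed simp

lemma perms_snoc: assumes "finite A" "A \<noteq> {}"
  shows "permutations_of_set A = (\<Union>x\<in>A. (\<lambda>\<tau>. \<tau>@[x]) ` permutations_of_set (A-{x}))"
proof (intro equalityI subsetI)
  fix \<sigma> assume s: "\<sigma> \<in> permutations_of_set A"
  have st: "set \<sigma> = A" and d: "distinct \<sigma>" using permutations_of_setD[OF s] by auto
  have "\<sigma> \<noteq> []" using st assms(2) by auto
  then obtain ys x where e: "\<sigma> = ys@[x]" by (cases \<sigma> rule: rev_cases) auto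
  have "x \<notin> set ys" "distinct ys" using d e by auto
  moreover have "set ys \<union> {x} = A" using st e by auto
  ultimately have "x \<in> A" "set ys = A - {x}" "distinct ys" by auto
  then have "x \<in> A" "ys \<in> permutations_of_set (A-{x})" by (auto intro: permutations_of_setI)
  then show "\<sigma> \<in> (\<Union>x\<in>A. (\<lambda>\<tau>. \<tau>@[x]) ` permutations_of_set (A-{x}))" using e by blast
next
  fix \<sigma> assume "\<sigma> \<in> (\<Union>x\<in>A. (\<lambda>\<tau>. \<tau>@[x]) ` permutations_of_set (A-{x}))"
  then obtain x \<tau> where x: "x \<in> A" and t: "\<tau> \<in> permutations_of_set (A-{x})" and e: "\<sigma> = \<tau>@[x]"
    by blast
  have "set \<tau> = A - {x}" "distinct \<tau>" using permutations_of_setD[OF t] by auto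
  then have "set \<sigma> = A" "distinct \<sigma>" using e x by auto
  then show "\<sigma> \<in> permutations_of_set A" by (rule permutations_of_setI)
qed

lemma sum_perms_snoc: assumes "finite A" "A \<noteq> {}"
  shows "(\<Sum>\<sigma>\<in>permutations_of_set A. f \<sigma>) = (\<Sum>x\<in>A. \<Sum>\<tau>\<in>permutations_of_set (A-{x}). f (\<tau>@[x]))"
proof -
  have "(\<Sum>\<sigma>\<in>permutations_of_set A. f \<sigma>) =
        (\<Sum>x\<in>A. \<Sum>\<sigma>\<in>(\<lambda>\<tau>. \<tau>@[x]) ` permutations_of_set (A-{x}). f \<sigma>)"
    unfolding perms_snoc[OF assms]
  proof (rule sum.UNION_disjoint[OF assms(1)])
    show "\<forall>x\<in>A. finite ((\<lambda>\<tau>. \<tau>@[x]) ` permutations_of_set (A-{x}))" by simp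
    show "\<forall>x\<in>A. \<forall>y\<in>A. x \<noteq> y \<longrightarrow>
      (\<lambda>\<tau>. \<tau>@[x]) ` permutations_of_set (A-{x}) \<inter> (\<lambda>\<tau>. \<tau>@[y]) ` permutations_of_set (A-{y}) = {}"
      by blast
  qed
  also have "\<dots> = (\<Sum>x\<in>A. \<Sum>\<tau>\<in>permutations_of_set (A-{x}). f (\<tau>@[x]))"
  proof (rule sum.cong[OF refl])
    fix x assume "x \<in> A"
    have "inj_on (\<lambda>\<tau>. \<tau>@[x]) (permutations_of_set (A-{x}))" by (rule inj_onI) simp
    then show "(\<Sum>\<sigma>\<in>(\<lambda>\<tau>. \<tau>@[x]) ` permutations_of_set (A-{x}). f \<sigma>) =
       (\<Sum>\<tau>\<in>permutations_of_set (A-{x}). f (\<tau>@[x]))" by (rule sum.reindex[unfolded comp_def])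
  qed
  finally show ?thesis .
qed

lemma G_compute:
  fixes B :: "nat set" and x :: nat
  assumes fin: "finite B" and ne: "B \<noteq> {}" and xB: "x \<notin> B"
  shows "(\<Sum>\<tau>\<in>permutations_of_set B. int (c (\<tau>@[x]))^2 - int (c \<tau>)^2) =
    (if \<forall>y\<in>B. y < x then (2*int (card B)+1) + (int (card B)-1)*(2*int (card B)-3) else 1 - 2*int (card B))"
proof -
  define k where "k = card B"
  define P where "P = (\<forall>y\<in>B. y < x)"
  define g where "g = (\<lambda>\<tau>. int (c (\<tau>@[x]))^2 - int (c \<tau>)^2)"
  define s where "s = sorted_list_of_set B"
  define M where "M = Max B"
  define h where "h = (\<lambda>b. sorted_list_of_set (B-{b}) @ [b])"
  define D where "D = B - {M}"
  have k1: "k \<ge> 1" using fin ne unfolding k_def by (simp add: Suc_le_eq card_gt_0_iff)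
  have MB: "M \<in> B" unfolding M_def using fin ne by (rule Max_in)
  have leM: "\<forall>y\<in>B. y \<le> M" unfolding M_def using fin by simp
  have s_set: "set s = B" unfolding s_def using fin by simp
  have s_dist: "distinct s" unfolding s_def by simp
  have s_perm: "s \<in> permutations_of_set B" using s_set s_dist by (rule permutations_of_setI)
  have s_sorted: "sorted_wrt (<) s" unfolding s_def by (rule strict_sorted_list_of_set)
  have s_ne: "s \<noteq> []" using s_set ne by auto
  have s_len: "length s = k" unfolding s_def k_def by simp
  have last_s: "last s = M"
  proof -
    have "last s \<in> B" using s_ne s_set last_in_set by blast
    moreover have "M \<le> last s" using sorted_le_last[OF s_sorted] MB s_set by blast
    ultimately show ?thesis using leM by force
  qed
  have Pi: "P \<longleftrightarrow> M < x" unfolding P_def using MB leM by force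
  have gs: "g s = (if P then (int k+1)^2 - (int k)^2 else (int k-1)^2 - (int k)^2)"
  proof -
    have d: "distinct (s@[x])" using s_dist s_set xB by simp
    have "c s = k" using c_sorted[OF s_sorted s_ne] s_len by simp
    moreover have "c (s@[x]) = (if P then k + 1 else k - 1)"
      using c_sorted_snoc[OF s_sorted s_ne d] s_len last_s Pi by simp
    ultimately show ?thesis unfolding g_def using k1 by (simp add: of_nat_diff)
  qed
  have hD: "h b \<in> permutations_of_set B \<and> g (h b) = (if P then (int k - 1)^2 - (int k - 2)^2 else 0)"
    if bD: "b \<in> D" for b
  proof -
    have bB: "b \<in> B" and bM: "b \<noteq> M" using bD unfolding D_def by auto
    have bltM: "b < M" using bB bM leM by force
    define L where "L = sorted_list_of_set (B-{b})"
    have L_set: "set L = B - {b}" unfolding L_def using fin by simp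
    have L_dist: "distinct L" unfolding L_def by simp
    have L_sorted: "sorted_wrt (<) L" unfolding L_def by (rule strict_sorted_list_of_set)
    have MinL: "M \<in> set L" using L_set MB bM by simp
    then have "L \<noteq> []" by auto
    then obtain \<rho> a where La: "L = \<rho>@[a]" by (cases L rule: rev_cases) auto
    have "a = last L" using La by simp
    then have "M \<le> a" using sorted_le_last[OF L_sorted MinL] by simp
    moreover have "a \<in> B" using La L_set by auto
    ultimately have aM: "a = M" using leM by force
    have ba: "b < a" using aM bltM by simp
    have so: "sorted_wrt (<) (\<rho>@[a])" using L_sorted La by simp
    have lenL: "length L = k - 1" using L_dist L_set bB fin unfolding k_def
      by (metis card_Diff_singleton distinct_card)
    then have lr: "length \<rho> = k - 2" using La by simp
    have k2: "k \<ge> 2"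
    proof -
      have "{b, M} \<subseteq> B" using bB MB by auto
      then have "card {b, M} \<le> k" unfolding k_def using fin by (simp add: card_mono)
      then show ?thesis using bM by simp
    qed
    have hb: "h b = \<rho>@[a,b]" unfolding h_def L_def[symmetric] La by simp
    have perm: "h b \<in> permutations_of_set B"
    proof (rule permutations_of_setI)
      show "set (h b) = B" unfolding h_def L_def[symmetric] using L_set bB by auto
      show "distinct (h b)" unfolding h_def L_def[symmetric] using L_set L_dist by auto
    qed
    have cc: "c (\<rho>@[a,b]) = length \<rho>" "c (\<rho>@[a,b,x]) = length \<rho> + (if a < x then 1 else 0)"
      using c_type2[OF so ba] by auto
    have "g (h b) = (int (k-2) + (if P then 1 else 0))^2 - (int (k-2))^2"
      unfolding g_def hb using cc lr aM Pi by simp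
    also have "\<dots> = (if P then (int k - 1)^2 - (int k - 2)^2 else 0)"
      using k2 by (simp add: of_nat_diff)
    finally show ?thesis using perm by simp
  qed
  have zero: "g \<tau> = 0" if t: "\<tau> \<in> permutations_of_set B - insert s (h ` D)" for \<tau>
  proof -
    have tp: "\<tau> \<in> permutations_of_set B" and ts: "\<tau> \<noteq> s" and th: "\<tau> \<notin> h ` D" using t by auto
    have t_set: "set \<tau> = B" and t_dist: "distinct \<tau>" using permutations_of_setD[OF tp] by auto
    have ns: "\<not> sorted_wrt (<) \<tau>"
    proof
      assume "sorted_wrt (<) \<tau>"
      then have "sorted_list_of_set (set \<tau>) = \<tau>" by (rule sls_eq)
      then show False using ts t_set s_def by simp
    qed
    have nt: "\<forall>\<rho> a b. \<tau> = \<rho>@[a,b] \<longrightarrow> \<not> sorted_wrt (<) (\<rho>@[a])"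
    proof (intro allI impI notI)
      fix \<rho> a b assume e: "\<tau> = \<rho>@[a,b]" and so: "sorted_wrt (<) (\<rho>@[a])"
      have "a \<noteq> b" using t_dist e by simp
      then consider "a < b" | "b < a" by linarith
      then show False
      proof cases
        case 1
        have "\<forall>y\<in>set (\<rho>@[a]). y < b" using so 1 by (auto simp: sorted_wrt_append)
        then have "sorted_wrt (<) ((\<rho>@[a])@[b])" using so by (simp add: sorted_wrt_append)
        then show False using ns e by simp
      next
        case 2
        have bB: "b \<in> B" using e t_set by auto
        have "set (\<rho>@[a]) = B - {b}" using e t_set t_dist by auto
        then have "sorted_list_of_set (B - {b}) = \<rho>@[a]" using sls_eq[OF so] by simp
        then have "h b = \<tau>" unfolding h_def e by simp
        moreover have "a \<in> B" using e t_set by auto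
        then have "b \<noteq> M" using 2 leM by force
        then have "b \<in> D" unfolding D_def using bB by simp
        ultimately show False using th by blast
      qed
    qed
    show ?thesis unfolding g_def using c_other[OF ns nt] by simp
  qed
  have sub: "insert s (h ` D) \<subseteq> permutations_of_set B" using s_perm hD by auto
  have "(\<Sum>\<tau>\<in>permutations_of_set B. g \<tau>) = (\<Sum>\<tau>\<in>insert s (h ` D). g \<tau>)"
    by (rule sum.mono_neutral_right[OF finite_permutations_of_set sub]) (use zero in blast)
  also have "\<dots> = g s + (\<Sum>\<tau>\<in>h ` D. g \<tau>)"
  proof (rule sum.insert)
    show "finite (h ` D)" unfolding D_def using fin by simp
    show "s \<notin> h ` D"
    proof
      assume "s \<in> h ` D"
      then obtain b where "b \<in> D" "s = h b" by blast
      then have "last s = b" unfolding h_def by simp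
      then show False using last_s \<open>b \<in> D\<close> unfolding D_def by simp
    qed
  qed
  also have "(\<Sum>\<tau>\<in>h ` D. g \<tau>) = (\<Sum>b\<in>D. g (h b))"
  proof (rule sum.reindex[unfolded comp_def])
    show "inj_on h D"
    proof (rule inj_onI)
      fix b b' assume "h b = h b'"
      then have "last (h b) = last (h b')" by simp
      then show "b = b'" unfolding h_def by simp
    qed
  qed
  also have "\<dots> = (\<Sum>b\<in>D. (if P then (int k - 1)^2 - (int k - 2)^2 else 0))"
    using hD by (intro sum.cong) auto
  also have "\<dots> = int (card D) * (if P then (int k - 1)^2 - (int k - 2)^2 else 0)" by simp
  also have "int (card D) = int k - 1" unfolding D_def k_def using fin MB k1 k_def
    by (simp add: of_nat_diff)
  finally have "(\<Sum>\<tau>\<in>permutations_of_set B. g \<tau>) = g s + (int k - 1) * (if P then (int k - 1)^2 - (int k - 2)^2 else 0)" .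
  then show ?thesis unfolding g_def[symmetric] k_def[symmetric] P_def[symmetric] gs
    by (cases P) (simp_all add: algebra_simps power2_eq_square)
qed

definition S :: "nat set \<Rightarrow> int" where
  "S A = (\<Sum>\<sigma>\<in>permutations_of_set A. int (c \<sigma>)^2)"

lemma S_rec:
  assumes fin: "finite A" and n2: "card A \<ge> 2"
  shows "S A = (\<Sum>x\<in>A. S (A-{x})) + (6 - 2*int (card A))"
proof -
  define n where "n = int (card A)"
  define u where "u = (2*(n-1)+1) + (n-1-1)*(2*(n-1)-3)"
  define v where "v = 1 - 2*(n-1)"
  define M where "M = Max A"
  have ne: "A \<noteq> {}" using n2 by auto
  have MA: "M \<in> A" unfolding M_def using fin ne by (rule Max_in)
  have leM: "\<forall>y\<in>A. y \<le> M" unfolding M_def using fin by simp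
  have step: "(\<Sum>\<tau>\<in>permutations_of_set (A-{x}). int (c (\<tau>@[x]))^2) = S (A-{x}) + (if x = M then u else v)"
    if xA: "x \<in> A" for x
  proof -
    have cB: "card (A-{x}) = card A - 1" using xA fin by simp
    then have "card (A-{x}) \<ge> 1" using n2 by simp
    then have Bne: "A - {x} \<noteq> {}" by (metis card.empty not_one_le_zero)
    have cBi: "int (card (A-{x})) = n - 1" using cB n2 unfolding n_def by simp
    have Q: "(\<forall>y\<in>A-{x}. y < x) \<longleftrightarrow> x = M"
    proof
      assume h: "\<forall>y\<in>A-{x}. y < x"
      show "x = M"
      proof (rule ccontr)
        assume "x \<noteq> M"
        then have "M < x" using h MA by simp
        then show False using leM xA by force
      qed
    next
      assume "x = M"
      then show "\<forall>y\<in>A-{x}. y < x" using leM by force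
    qed
    have "(\<Sum>\<tau>\<in>permutations_of_set (A-{x}). int (c (\<tau>@[x]))^2) =
          S (A-{x}) + (\<Sum>\<tau>\<in>permutations_of_set (A-{x}). int (c (\<tau>@[x]))^2 - int (c \<tau>)^2)"
      unfolding S_def by (simp add: sum_subtractf)
    also have "(\<Sum>\<tau>\<in>permutations_of_set (A-{x}). int (c (\<tau>@[x]))^2 - int (c \<tau>)^2) = (if x = M then u else v)"
    proof -
      have xn: "x \<notin> A - {x}" by simp
      have fB: "finite (A-{x})" using fin by simp
      show ?thesis using G_compute[OF fB Bne xn] unfolding cBi Q u_def v_def by (simp only:)
    qed
    finally show ?thesis .
  qed
  have "S A = (\<Sum>x\<in>A. \<Sum>\<tau>\<in>permutations_of_set (A-{x}). int (c (\<tau>@[x]))^2)"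
    unfolding S_def by (rule sum_perms_snoc[OF fin ne])
  also have "\<dots> = (\<Sum>x\<in>A. S (A-{x}) + (if x = M then u else v))"
    using step by (intro sum.cong) auto
  also have "\<dots> = (\<Sum>x\<in>A. S (A-{x})) + (\<Sum>x\<in>A. (if x = M then u else v))"
    by (rule sum.distrib)
  also have "(\<Sum>x\<in>A. (if x = M then u else v)) = u + (\<Sum>x\<in>A-{M}. (if x = M then u else v))"
    by (subst sum.remove[OF fin MA]) simp_all
  also have "(\<Sum>x\<in>A-{M}. (if x = M then u else v)) = (\<Sum>x\<in>A-{M}. v)"
    by (rule sum.cong) auto
  also have "\<dots> = (n - 1) * v" using fin MA n2 unfolding n_def by (simp add: of_nat_diff)
  finally show ?thesis unfolding u_def v_def n_def by (simp add: algebra_simps)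
qed

fun T :: "nat \<Rightarrow> int" where
  "T 0 = 1" | "T (Suc 0) = 1"
| "T (Suc (Suc m)) = int (m+2) * T (Suc m) + 6 - 2*int (m+2)"

lemma S_T: "finite A \<Longrightarrow> S A = T (card A)"
proof (induction "card A" arbitrary: A rule: less_induct)
  case less
  show ?case
  proof (cases "card A")
    case 0
    then have "A = {}" using less.prems by simp
    then show ?thesis by (simp add: S_def)
  next
    case (Suc m)
    show ?thesis
    proof (cases m)
      case 0
      then obtain a where "A = {a}" using Suc card_1_singletonE by auto
      then show ?thesis by (simp add: S_def)
    next
      case (Suc m')
      have n2: "card A \<ge> 2" using \<open>card A = Suc m\<close> Suc by simp
      have "\<forall>x\<in>A. S (A-{x}) = T (Suc m')"
      proof
        fix x assume "x \<in> A"
        then have "card (A-{x}) = Suc m'" using less.prems \<open>card A = Suc m\<close> Suc by simp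
        moreover have "card (A-{x}) < card A" by (rule card_Diff1_less[OF less.prems \<open>x \<in> A\<close>])
        ultimately show "S (A-{x}) = T (Suc m')" using less.hyps[of "A-{x}"] less.prems by simp
      qed
      then have "(\<Sum>x\<in>A. S (A-{x})) = int (card A) * T (Suc m')" by simp
      then show ?thesis using S_rec[OF less.prems n2] \<open>card A = Suc m\<close> Suc by (simp add: algebra_simps)
    qed
  qed
qed

lemma deg_T: "map_deg nib (Sym n) (Sym n) = of_int (T n) / fact n"
proof -
  have nibeq: "nib = nb" using nib_nb by (rule ext)
  have fin: "finite {1..n}" by simp
  have cardeq: "card {x\<in>Sym n. nib x = y} = c y" if y: "y \<in> Sym n" for y
  proof -
    have yd: "distinct y" and ys: "set y = {1..n}" using y permutations_of_setD unfolding Sym_def by auto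
    have "{x\<in>Sym n. nib x = y} = {x. nb x = y}"
    proof (intro equalityI subsetI)
      fix x assume "x \<in> {x. nb x = y}"
      then have "nb x = y" by simp
      then have "set x = {1..n}" "distinct x" using ys yd nb_set[of x] nb_distinct[of x] by auto
      then show "x \<in> {x\<in>Sym n. nib x = y}" using \<open>nb x = y\<close> nibeq unfolding Sym_def
        by (auto intro: permutations_of_setI)
    qed (use nibeq in auto)
    then show ?thesis using card_pre[OF yd] by simp
  qed
  have "(\<Sum>y\<in>Sym n. real (card {x\<in>Sym n. nib x = y}) ^ 2) = (\<Sum>y\<in>Sym n. real_of_int (int (c y) ^ 2))"
    using cardeq by (intro sum.cong) auto
  also have "\<dots> = real_of_int (S {1..n})" unfolding S_def Sym_def by simp
  also have "\<dots> = real_of_int (T n)" using S_T[OF fin] by simp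
  finally show ?thesis unfolding map_deg_def Sym_def using fin by simp
qed

definition a :: "nat \<Rightarrow> real" where "a m = (\<Sum>i<m. 1 / fact i)"

lemma common_den: "(F::real) \<noteq> 0 \<Longrightarrow> y \<noteq> 0 \<Longrightarrow> p / F = (p*y)/(y*F)"
  by simp

lemma T_a: "of_int (T (Suc m)) / fact (Suc m) = 6 * a (Suc (Suc m)) - 2 * a (Suc m) - 9"
proof (induction m)
  case 0 then show ?case by (simp add: a_def)
next
  case (Suc m)
  define F :: real where "F = fact (Suc m)"
  define Tm where "Tm = (of_int (T (Suc m)) :: real)"
  have F0: "F \<noteq> 0" unfolding F_def by simp
  have m2: "real m + 2 \<noteq> 0" by simp
  have fSS: "(fact (Suc (Suc m)) :: real) = (real m + 2) * F" unfolding F_def by (simp add: algebra_simps)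
  have aS: "a (Suc k) = a k + 1 / fact k" for k unfolding a_def by simp
  have "of_int (T (Suc (Suc m))) / fact (Suc (Suc m)) =
        ((real m + 2) * Tm + 6 - 2 * (real m + 2)) / ((real m + 2) * F)"
    unfolding fSS Tm_def by (simp add: algebra_simps)
  also have "\<dots> = (Tm * (real m + 2)) / ((real m + 2) * F) + 6 / ((real m + 2) * F) - (2 * (real m + 2)) / ((real m + 2) * F)"
    by (simp add: add_divide_distrib diff_divide_distrib algebra_simps)
  also have "\<dots> = Tm / F + 6 / ((real m + 2) * F) - 2 / F"
    using common_den[OF F0 m2, of Tm] common_den[OF F0 m2, of 2] by simp
  also have "Tm / F = 6 * a (Suc (Suc m)) - 2 * a (Suc m) - 9"
    using Suc.IH unfolding F_def Tm_def .
  finally show ?case unfolding aS[of "Suc (Suc m)"] aS[of "Suc m"] fSS F_def by simp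
qed

lemma poly_step:
  fixes x F :: real assumes "F \<noteq> 0" "x \<ge> 0"
  shows "((x+1)*x^2 + (x+2)^2)/((x+2)*F) - (x*(x-1)^2 + (x+1)^2)/F + x*(x^3-x+1)/((x+2)*F)
       = 6/((x+2)*F) - 2/F"
proof -
  have m2: "x + 2 \<noteq> 0" using assms by simp
  define A where "A = (x+1)*x^2 + (x+2)^2"
  define Bq where "Bq = x*(x-1)^2 + (x+1)^2"
  define C where "C = x*(x^3-x+1)"
  define D where "D = (x+2)*F"
  have num: "A - Bq*(x+2) + C = 6 - 2*(x+2)" unfolding A_def Bq_def C_def
    by (simp add: algebra_simps power2_eq_square power3_eq_cube)
  have "A/D - Bq/F + C/D = A/D - (Bq*(x+2))/D + C/D"
    using common_den[OF assms(1) m2, of Bq] unfolding D_def by simp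
  also have "\<dots> = (A - Bq*(x+2) + C)/D" by (simp add: add_divide_distrib diff_divide_distrib)
  also have "\<dots> = (6 - 2*(x+2))/D" using num by simp
  also have "\<dots> = 6/D - (2*(x+2))/D" by (rule diff_divide_distrib)
  also have "\<dots> = 6/D - 2/F"
    using common_den[OF assms(1) m2, of 2] unfolding D_def by simp
  finally show ?thesis unfolding A_def Bq_def C_def D_def .
qed

definition Fm :: "nat \<Rightarrow> real" where
  "Fm n = ((real n - 1) * (real n - 2) ^ 2 + real n ^ 2) / fact n
              + (\<Sum>k = 1..n - 2. real k * (real k ^ 3 - real k + 1) / fact (k + 2))"

lemma Fm_a: "Fm (Suc m) = 6 * a (Suc (Suc m)) - 2 * a (Suc m) - 9"
proof (induction m)
  case 0 then show ?case by (simp add: a_def Fm_def)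
next
  case (Suc m)
  define F :: real where "F = fact (Suc m)"
  have F0: "F \<noteq> 0" unfolding F_def by simp
  have x0: "real m \<ge> 0" by simp
  have fSS: "(fact (Suc (Suc m)) :: real) = (real m + 2) * F" unfolding F_def by (simp add: algebra_simps)
  have fS2: "(fact (m + 2) :: real) = (real m + 2) * F" using fSS by simp
  have aS: "a (Suc k) = a k + 1 / fact k" for k unfolding a_def by simp
  have fS: "(fact (Suc m) :: real) = F" unfolding F_def by simp
  define t where "t = (\<lambda>k::nat. real k * (real k ^ 3 - real k + 1) / fact (k + 2))"
  have sumeq: "(\<Sum>k = 1..m. t k) = (\<Sum>k = 1..m - 1. t k) + t m"
    by (cases m) (simp_all add: t_def)
  have "Fm (Suc (Suc m)) = ((real m+1)*(real m)^2 + (real m+2)^2)/((real m+2)*F) + (\<Sum>k = 1..m. t k)"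
    unfolding Fm_def t_def fSS by (simp add: algebra_simps)
  moreover have "Fm (Suc m) = (real m*(real m-1)^2 + (real m+1)^2)/F + (\<Sum>k = 1..m - 1. t k)"
    unfolding Fm_def t_def fS by (simp add: algebra_simps)
  moreover have "t m = real m*((real m)^3-real m+1)/((real m+2)*F)" unfolding t_def fS2 by simp
  ultimately have eq: "Fm (Suc (Suc m)) - Fm (Suc m) = 6/((real m+2)*F) - 2/F"
    using sumeq poly_step[OF F0 x0] by simp
  have a3: "a (Suc (Suc (Suc m))) = a (Suc (Suc m)) + 1/((real m+2)*F)"
    using aS[of "Suc (Suc m)"] fSS by simp
  have a2: "a (Suc (Suc m)) = a (Suc m) + 1/F" using aS[of "Suc m"] fS by simp
  show ?case unfolding a3 using Suc.IH eq a2 by (simp add: algebra_simps)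
qed

lemma a_lim: "a \<longlonglongrightarrow> exp 1"
proof -
  have "(\<lambda>n. 1 ^ n /\<^sub>R fact n) sums exp (1::real)" by (rule exp_converges)
  then show ?thesis unfolding sums_def a_def by (simp add: divide_inverse)
qed

theorem mainTheorem11:
  shows "(\<forall>n::nat. n \<ge> 1 \<longrightarrow>
            map_deg nib (Sym n) (Sym n) =
              ((real n - 1) * (real n - 2) ^ 2 + real n ^ 2) / fact n
              + (\<Sum>k = 1..n - 2. real k * (real k ^ 3 - real k + 1) / fact (k + 2)))
       \<and> (\<lambda>n. map_deg nib (Sym n) (Sym n)) \<longlonglongrightarrow> 4 * exp 1 - 9"
proof
  have key: "map_deg nib (Sym n) (Sym n) = 6 * a (Suc n) - 2 * a n - 9" if n1: "n \<ge> 1" for n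
  proof -
    obtain m where "n = Suc m" using n1 by (cases n) auto
    then show ?thesis using deg_T T_a by simp
  qed
  show "\<forall>n::nat. n \<ge> 1 \<longrightarrow>
            map_deg nib (Sym n) (Sym n) =
              ((real n - 1) * (real n - 2) ^ 2 + real n ^ 2) / fact n
              + (\<Sum>k = 1..n - 2. real k * (real k ^ 3 - real k + 1) / fact (k + 2))"
  proof (intro allI impI)
    fix n :: nat assume n1: "n \<ge> 1"
    obtain m where nm: "n = Suc m" using n1 by (cases n) auto
    have "map_deg nib (Sym n) (Sym n) = Fm n" using key[OF n1] Fm_a[of m] nm by simp
    then show "map_deg nib (Sym n) (Sym n) =
              ((real n - 1) * (real n - 2) ^ 2 + real n ^ 2) / fact n
              + (\<Sum>k = 1..n - 2. real k * (real k ^ 3 - real k + 1) / fact (k + 2))"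
      unfolding Fm_def .
  qed
  have lim: "(\<lambda>n. 6 * a (Suc n) - 2 * a n - 9) \<longlonglongrightarrow> 6 * exp 1 - 2 * exp 1 - 9"
    by (intro tendsto_intros a_lim LIMSEQ_Suc)
  have ev: "eventually (\<lambda>n. 6 * a (Suc n) - 2 * a n - 9 = map_deg nib (Sym n) (Sym n)) sequentially"
    unfolding eventually_sequentially using key by (intro exI[of _ 1]) auto
  have "(\<lambda>n. map_deg nib (Sym n) (Sym n)) \<longlonglongrightarrow> 6 * exp 1 - 2 * exp 1 - 9"
    by (rule Lim_transform_eventually[OF lim ev])
  then show "(\<lambda>n. map_deg nib (Sym n) (Sym n)) \<longlonglongrightarrow> 4 * exp 1 - 9" by simp
qed
end
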